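(* Suppose that $A$ is normally elliptic with ellipticity constant $\kappa$ and symbol $a$ of order $m$. Then there exist $\varphi, \gamma, \omega, M > 0$ such that for all $\xi \in \mathbb{R}^d$ and all $\lambda \in \Sigma_{\varphi,-\gamma\lvert \xi \rvert^m + \omega}$ the operator $\lambda+a(\xi)$ is invertible and \[ \lVert (\lambda + a(\xi))^{-1} \rVert \leq \frac{M}{\lvert \xi \rvert^m + \lvert\lambda + \gamma\lvert \xi\rvert^m \rvert} . \] The parameters $\varphi, \gamma$ depend only on $a_m$, while $\omega$ depends on $a_m$ and $N_0(a-a_m)$. Moreover, one can choose $M = 4\kappa +2$.
   Context: Let $X$ be a Banach space, $d,m\in\mathbb{N}$, and $a(\xi)=\sum_{\lvert\alpha\rvert\le m}a_\alpha\xi^\alpha$ with $a_\alpha\in\mathcal{L}(X)$ and $a_\alpha\neq0$ for some $\lvert\alpha\rvert=m$; $a_m(\xi)=\sum_{\lvert\alpha\rvert=m}a_\alpha\xi^\alpha$ is its principal symbol and $A=a(D)$. For $\vartheta\in[0,\pi)$, $\omega\in\mathbb{R}$: $\Sigma_{\vartheta,\omega}=\{z\in\mathbb{C}:\lvert\arg(z-\omega)\rvert\le\vartheta\}\cup\{0\}$. $A$ is $(\kappa,\vartheta,\omega)$-elliptic ($\kappa\ge1$) if for all $\lvert\xi\rvert=1$ the resolvent set of $-a_m(\xi)$ contains $\Sigma_{\vartheta,\omega}$ and $\lVert(\lambda+a_m(\xi))^{-1}\rVert\le\kappa/(1+\lvert\lambda-\omega\rvert)$ for $\lambda\in\Sigma_{\vartheta,\omega}$;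 normally elliptic with ellipticity constant $\kappa$ means $(\kappa,\pi/2,0)$-elliptic. For an $\mathcal{L}(X)$-valued polynomial $p$ of degree $n$ and a multi-index $\alpha$, $N_\alpha(p)=\max_{\beta\le\alpha}\sup_{\xi\in\mathbb{R}^d}\lVert\partial^\beta p(\xi)\rVert/(1+\lvert\xi\rvert)^{n-\lvert\beta\rvert}$ (componentwise order on multi-indices); here $a-a_m$ is regarded as a polynomial of degree $m-1$. *)

theory Defs
  imports "HOL-Analysis.Analysis"
begin

text \<open>A complex Banach space X is encoded as a
  real Banach space 'a together with a bounded operator J (multiplication by i) with
  J J = -1 and norm (a x + b J x) = |a + i b| norm x, so that scalar multiplication
  (a + i b) x := a x + b J x makes 'a a complex normed (Banach) space.\<close>

definition complex_structure :: "('a::real_normed_vector \<Rightarrow>\<^sub>L 'a) \<Rightarrow> bool" where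
  "complex_structure J \<longleftrightarrow> J o\<^sub>L J = - id_blinfun \<and>
     (\<forall>a b x. norm (a *\<^sub>R x + b *\<^sub>R blinfun_apply J x) = cmod (Complex a b) * norm x)"

definition cmult :: "('a::real_normed_vector \<Rightarrow>\<^sub>L 'a) \<Rightarrow> complex \<Rightarrow> 'a \<Rightarrow> 'a" where
  "cmult J c x = Re c *\<^sub>R x + Im c *\<^sub>R blinfun_apply J x"

text \<open>Elements of L(X): bounded real-linear operators which are complex linear.\<close>
definition clin_op :: "('a::real_normed_vector \<Rightarrow>\<^sub>L 'a) \<Rightarrow> ('a \<Rightarrow>\<^sub>L 'a) \<Rightarrow> bool" where
  "clin_op J T \<longleftrightarrow> (\<forall>c x. blinfun_apply T (cmult J c x) = cmult J c (blinfun_apply T x))"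

definition cscal :: "('a::real_normed_vector \<Rightarrow>\<^sub>L 'a) \<Rightarrow> complex \<Rightarrow> ('a \<Rightarrow>\<^sub>L 'a)" where
  "cscal J c = Re c *\<^sub>R id_blinfun + Im c *\<^sub>R J"

definition is_inverse_op :: "('a::real_normed_vector \<Rightarrow>\<^sub>L 'a) \<Rightarrow> ('a \<Rightarrow>\<^sub>L 'a) \<Rightarrow> bool" where
  "is_inverse_op S T \<longleftrightarrow> S o\<^sub>L T = id_blinfun \<and> T o\<^sub>L S = id_blinfun"

text \<open>Sector Sigma_{theta,omega}, vertex omega included (Arg 0 = 0).\<close>
definition sector :: "real \<Rightarrow> real \<Rightarrow> complex set" where
  "sector \<theta> \<omega> = {z. \<bar>Arg (z - complex_of_real \<omega>)\<bar> \<le> \<theta>}"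

definition mi_abs :: "('d::finite \<Rightarrow> nat) \<Rightarrow> nat" where
  "mi_abs \<alpha> = (\<Sum>i\<in>UNIV. \<alpha> i)"

definition mono_pow :: "real^'d \<Rightarrow> ('d::finite \<Rightarrow> nat) \<Rightarrow> real" where
  "mono_pow \<xi> \<alpha> = (\<Prod>i\<in>UNIV. (\<xi> $ i) ^ \<alpha> i)"

definition symb :: "nat \<Rightarrow> (('d::finite \<Rightarrow> nat) \<Rightarrow> ('a::real_normed_vector \<Rightarrow>\<^sub>L 'a)) \<Rightarrow> real^'d \<Rightarrow> ('a \<Rightarrow>\<^sub>L 'a)" where
  "symb n c \<xi> = (\<Sum>\<alpha>\<in>{\<alpha>. mi_abs \<alpha> \<le> n}. mono_pow \<xi> \<alpha> *\<^sub>R c \<alpha>)"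

definition N0 :: "nat \<Rightarrow> (real^'d::finite \<Rightarrow> ('a::real_normed_vector \<Rightarrow>\<^sub>L 'a)) \<Rightarrow> real" where
  "N0 n p = (SUP \<xi>. norm (p \<xi>) / (1 + norm \<xi>) ^ n)"

definition elliptic :: "('a::real_normed_vector \<Rightarrow>\<^sub>L 'a) \<Rightarrow> real \<Rightarrow> real \<Rightarrow> real \<Rightarrow> nat \<Rightarrow> (('d::finite \<Rightarrow> nat) \<Rightarrow> ('a \<Rightarrow>\<^sub>L 'a)) \<Rightarrow> bool" where
  "elliptic J \<kappa> \<theta> \<omega> m p \<longleftrightarrow> \<kappa> \<ge> 1 \<and>
     (\<forall>\<xi>::real^'d. norm \<xi> = 1 \<longrightarrow> (\<forall>z\<in>sector \<theta> \<omega>.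
        \<exists>S. is_inverse_op S (cscal J z + symb m p \<xi>) \<and>
            norm S \<le> \<kappa> / (1 + cmod (z - complex_of_real \<omega>))))"

definition normally_elliptic :: "('a::real_normed_vector \<Rightarrow>\<^sub>L 'a) \<Rightarrow> real \<Rightarrow> nat \<Rightarrow> (('d::finite \<Rightarrow> nat) \<Rightarrow> ('a \<Rightarrow>\<^sub>L 'a)) \<Rightarrow> bool" where
  "normally_elliptic J \<kappa> m p \<longleftrightarrow> elliptic J \<kappa> (pi/2) 0 m p"

end

theory Submission
  imports Defs
begin

lemma neumann:
  fixes K :: "'a::banach \<Rightarrow>\<^sub>L 'a"
  assumes K: "norm K < 1"
  shows "\<exists>S. is_inverse_op S (id_blinfun - K) \<and> norm S \<le> 1 / (1 - norm K)"
proof -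
  define P where "P n = ((\<lambda>X. K o\<^sub>L X) ^^ n) id_blinfun" for n
  have P0: "P 0 = id_blinfun" by (simp add: P_def)
  have PS: "P (Suc n) = K o\<^sub>L P n" for n by (simp add: P_def)
  have PS': "P (Suc n) = P n o\<^sub>L K" for n
  proof (induction n)
    case 0 then show ?case by (auto simp: PS P0 intro!: blinfun_eqI)
  next
    case (Suc n)
    have "P (Suc (Suc n)) = K o\<^sub>L (P n o\<^sub>L K)" using Suc by (simp add: PS)
    also have "\<dots> = P (Suc n) o\<^sub>L K" by (auto simp: PS intro!: blinfun_eqI)
    finally show ?case .
  qed
  have Pn: "norm (P n) \<le> norm K ^ n" for n
  proof (induction n)
    case 0 then show ?case using norm_blinfun_id_le by (simp add: P0)
  next
    case (Suc n)
    have "norm (P (Suc n)) \<le> norm K * norm (P n)" unfolding PS by (rule norm_blinfun_compose)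
    also have "\<dots> \<le> norm K * norm K ^ n" using Suc by (simp add: mult_left_mono)
    finally show ?case by simp
  qed
  have sg: "summable (\<lambda>n. norm K ^ n)" using K by (simp add: summable_geometric)
  have sP: "summable P" by (rule summable_comparison_test'[OF sg Pn])
  have snP: "summable (\<lambda>n. norm (P n))" by (rule summable_comparison_test'[OF sg]) (use Pn in auto)
  define S where "S = suminf P"
  have "norm S \<le> (\<Sum>n. norm (P n))" unfolding S_def by (rule summable_norm[OF snP])
  also have "\<dots> \<le> (\<Sum>n. norm K ^ n)" by (rule suminf_le[OF Pn snP sg])
  also have "\<dots> = 1 / (1 - norm K)" using K by (simp add: suminf_geometric)
  finally have nS: "norm S \<le> 1 / (1 - norm K)" .
  have bl1: "bounded_linear (\<lambda>X. K o\<^sub>L X)"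
    by (rule bounded_bilinear.bounded_linear_right[OF bounded_bilinear_blinfun_compose])
  have bl2: "bounded_linear (\<lambda>X. X o\<^sub>L K)"
    by (rule bounded_bilinear.bounded_linear_left[OF bounded_bilinear_blinfun_compose])
  have KS: "K o\<^sub>L S = (\<Sum>n. P (Suc n))"
    unfolding S_def PS using bounded_linear.suminf[OF bl1 sP] by simp
  have SK: "S o\<^sub>L K = (\<Sum>n. P (Suc n))"
    unfolding S_def PS' using bounded_linear.suminf[OF bl2 sP] by simp
  have tel: "(\<Sum>n. P (Suc n)) = S - id_blinfun"
    unfolding S_def using suminf_split_head[OF sP] P0 by simp
  have "(id_blinfun - K) o\<^sub>L S = S - (K o\<^sub>L S)"
    by (rule blinfun_eqI) (simp add: blinfun.diff_left)
  also have "\<dots> = id_blinfun" using KS tel by simp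
  finally have 1: "(id_blinfun - K) o\<^sub>L S = id_blinfun" .
  have "S o\<^sub>L (id_blinfun - K) = S - (S o\<^sub>L K)"
    by (rule blinfun_eqI) (simp add: blinfun.diff_left blinfun.diff_right)
  also have "\<dots> = id_blinfun" using SK tel by simp
  finally have 2: "S o\<^sub>L (id_blinfun - K) = id_blinfun" .
  show ?thesis using 1 2 nS unfolding is_inverse_op_def by blast
qed

lemmas bls = plus_blinfun.rep_eq minus_blinfun.rep_eq uminus_blinfun.rep_eq
  scaleR_blinfun.rep_eq zero_blinfun.rep_eq

lemma perturb:
  fixes T R B :: "'a::banach \<Rightarrow>\<^sub>L 'a"
  assumes inv: "is_inverse_op R T" and nR: "norm R \<le> \<rho>" and nB: "norm B * \<rho> \<le> \<delta>"
    and d: "\<delta> < 1"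
  shows "\<exists>S. is_inverse_op S (T + B) \<and> norm S \<le> \<rho> / (1 - \<delta>)"
proof -
  define K where "K = - (R o\<^sub>L B)"
  have "norm K \<le> norm R * norm B" unfolding K_def using norm_blinfun_compose by simp
  also have "\<dots> \<le> \<rho> * norm B" using nR by (simp add: mult_right_mono)
  also have "\<dots> \<le> \<delta>" using nB by (simp add: mult.commute)
  finally have nK: "norm K \<le> \<delta>" .
  then have "norm K < 1" using d by simp
  from neumann[OF this] obtain S0 where S0: "is_inverse_op S0 (id_blinfun - K)"
    and nS0: "norm S0 \<le> 1 / (1 - norm K)" by blast
  have TR: "T (R y) = y" for y
    using inv unfolding is_inverse_op_def by (metis blinfun_apply_blinfun_compose blinfun_apply_id_blinfun)
  have RT: "R (T y) = y" for y
    using inv unfolding is_inverse_op_def by (metis blinfun_apply_blinfun_compose blinfun_apply_id_blinfun)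
  have eq: "T + B = T o\<^sub>L (id_blinfun - K)"
    by (rule blinfun_eqI) (simp add: K_def blinfun.diff_left blinfun.add_left blinfun.add_right TR)
  define S where "S = S0 o\<^sub>L R"
  have "S o\<^sub>L (T + B) = id_blinfun"
  proof (rule blinfun_eqI)
    fix x
    have "S0 ((id_blinfun - K) x) = x" using S0 unfolding is_inverse_op_def
      by (metis blinfun_apply_blinfun_compose blinfun_apply_id_blinfun)
    then show "blinfun_apply (S o\<^sub>L (T + B)) x = blinfun_apply id_blinfun x"
      unfolding eq S_def by (simp add: RT)
  qed
  moreover have "(T + B) o\<^sub>L S = id_blinfun"
  proof (rule blinfun_eqI)
    fix x
    have "(id_blinfun - K) (S0 y) = y" for y using S0 unfolding is_inverse_op_def
      by (metis blinfun_apply_blinfun_compose blinfun_apply_id_blinfun)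
    then show "blinfun_apply ((T + B) o\<^sub>L S) x = blinfun_apply id_blinfun x"
      unfolding eq S_def by (simp add: TR)
  qed
  moreover have "norm S \<le> \<rho> / (1 - \<delta>)"
  proof -
    have "norm S \<le> norm S0 * norm R" unfolding S_def by (rule norm_blinfun_compose)
    also have "\<dots> \<le> (1 / (1 - \<delta>)) * \<rho>"
    proof (rule mult_mono)
      have "1 / (1 - norm K) \<le> 1 / (1 - \<delta>)" using nK d
        by (intro divide_left_mono) auto
      then show "norm S0 \<le> 1 / (1 - \<delta>)" using nS0 by linarith
    qed (use nR d in auto)
    finally show ?thesis by simp
  qed
  ultimately show ?thesis unfolding is_inverse_op_def by blast
qed

lemma cscal_apply: "blinfun_apply (cscal J z) x = Re z *\<^sub>R x + Im z *\<^sub>R J x"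
  by (simp add: cscal_def bls)

lemma norm_cscal_apply:
  assumes "complex_structure J"
  shows "norm (cscal J z x) = cmod z * norm x"
  using assms unfolding complex_structure_def cscal_apply
  by (metis complex.collapse)

lemma norm_cscal:
  assumes "complex_structure J"
  shows "norm (cscal J z) \<le> cmod z"
  by (rule norm_blinfun_bound) (simp_all add: norm_cscal_apply[OF assms])

lemma JJ:
  assumes "complex_structure J"
  shows "J (J x) = - x"
proof -
  have "J o\<^sub>L J = - id_blinfun" using assms unfolding complex_structure_def by simp
  then have "(J o\<^sub>L J) x = (- id_blinfun) x" by simp
  then show ?thesis by (simp add: bls)
qed

lemma cscal_mult:
  assumes "complex_structure J"
  shows "cscal J z o\<^sub>L cscal J w = cscal J (z * w)"
  by (rule blinfun_eqI)
    (simp add: cscal_apply blinfun.add_right blinfun.scaleR_right JJ[OF assms] algebra_simps)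

lemma cscal_one: "cscal J 1 = id_blinfun"
  by (simp add: cscal_def)

lemma cscal_add: "cscal J (z + w) = cscal J z + cscal J w"
  by (simp add: cscal_def algebra_simps)

lemma cscal_of_real: "cscal J (complex_of_real r) = r *\<^sub>R id_blinfun"
  by (simp add: cscal_def)

lemma cscal_div_real: "cscal J (z / complex_of_real s) = (1 / s) *\<^sub>R cscal J z"
proof -
  have 1: "Re (z / complex_of_real s) = Re z / s" by (rule Re_divide_of_real)
  have 2: "Im (z / complex_of_real s) = Im z / s" by (rule Im_divide_of_real)
  show ?thesis by (rule blinfun_eqI) (simp only: cscal_apply bls 1 2, simp add: algebra_simps divide_inverse)
qed

lemma sector_half: "z \<in> sector (pi/2) v \<longleftrightarrow> v \<le> Re z"
  unfolding sector_def using Arg_Re_nonneg[of "z - complex_of_real v"] by auto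

lemma finite_mi: "finite {\<alpha>::'d::finite \<Rightarrow> nat. mi_abs \<alpha> \<le> n}"
proof -
  have "finite (Pi\<^sub>E (UNIV::'d set) (\<lambda>_. {..n}))" by (intro finite_PiE) auto
  then have f: "finite (Pi (UNIV::'d set) (\<lambda>_. {..n}))" by (simp add: PiE_UNIV_domain)
  have "{\<alpha>::'d \<Rightarrow> nat. mi_abs \<alpha> \<le> n} \<subseteq> Pi UNIV (\<lambda>_. {..n})"
  proof
    fix \<alpha> :: "'d \<Rightarrow> nat" assume "\<alpha> \<in> {\<alpha>. mi_abs \<alpha> \<le> n}"
    then have "mi_abs \<alpha> \<le> n" by simp
    moreover have "\<alpha> i \<le> mi_abs \<alpha>" for i unfolding mi_abs_def by (rule member_le_sum) auto
    ultimately show "\<alpha> \<in> Pi UNIV (\<lambda>_. {..n})" by (auto intro: le_trans)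
  qed
  then show ?thesis using f by (rule finite_subset)
qed

lemma mono_pow_scale: "mono_pow (r *\<^sub>R \<xi>) \<alpha> = r ^ mi_abs \<alpha> * mono_pow \<xi> \<alpha>"
  unfolding mono_pow_def mi_abs_def by (simp add: power_mult_distrib prod.distrib power_sum)

lemma symb_hom:
  fixes p :: "('d::finite \<Rightarrow> nat) \<Rightarrow> ('a::real_normed_vector \<Rightarrow>\<^sub>L 'a)"
  assumes "\<forall>\<alpha>. mi_abs \<alpha> \<noteq> m \<longrightarrow> p \<alpha> = 0"
  shows "symb m p (r *\<^sub>R \<xi>) = r ^ m *\<^sub>R symb m p \<xi>"
proof -
  have "symb m p (r *\<^sub>R \<xi>) = (\<Sum>\<alpha>\<in>{\<alpha>. mi_abs \<alpha> \<le> m}. r ^ m *\<^sub>R (mono_pow \<xi> \<alpha> *\<^sub>R p \<alpha>))"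
    unfolding symb_def
  proof (rule sum.cong)
    fix \<alpha> :: "'d \<Rightarrow> nat" assume "\<alpha> \<in> {\<alpha>. mi_abs \<alpha> \<le> m}"
    show "mono_pow (r *\<^sub>R \<xi>) \<alpha> *\<^sub>R p \<alpha> = r ^ m *\<^sub>R (mono_pow \<xi> \<alpha> *\<^sub>R p \<alpha>)"
      using assms by (cases "mi_abs \<alpha> = m") (auto simp: mono_pow_scale)
  qed simp
  also have "\<dots> = r ^ m *\<^sub>R symb m p \<xi>" unfolding symb_def by (simp add: scaleR_sum_right)
  finally show ?thesis .
qed

lemma symb_split:
  fixes p b :: "('d::finite \<Rightarrow> nat) \<Rightarrow> ('a::real_normed_vector \<Rightarrow>\<^sub>L 'a)"
  assumes m: "m \<ge> 1" and p: "\<forall>\<alpha>. mi_abs \<alpha> \<noteq> m \<longrightarrow> p \<alpha> = 0"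
    and b: "\<forall>\<alpha>. mi_abs \<alpha> \<ge> m \<longrightarrow> b \<alpha> = 0"
  shows "symb m (\<lambda>\<alpha>. p \<alpha> + b \<alpha>) \<xi> = symb m p \<xi> + symb (m - 1) b \<xi>"
proof -
  have "symb m (\<lambda>\<alpha>. p \<alpha> + b \<alpha>) \<xi> = symb m p \<xi> + symb m b \<xi>"
    unfolding symb_def by (simp add: scaleR_add_right sum.distrib)
  moreover have "symb m b \<xi> = symb (m - 1) b \<xi>"
    unfolding symb_def
  proof (rule sum.mono_neutral_right)
    show "finite {\<alpha>::'d \<Rightarrow> nat. mi_abs \<alpha> \<le> m}" by (rule finite_mi)
    show "{\<alpha>::'d \<Rightarrow> nat. mi_abs \<alpha> \<le> m - 1} \<subseteq> {\<alpha>. mi_abs \<alpha> \<le> m}" by auto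
    show "\<forall>i\<in>{\<alpha>. mi_abs \<alpha> \<le> m} - {\<alpha>. mi_abs \<alpha> \<le> m - 1}. mono_pow \<xi> i *\<^sub>R b i = 0"
      using b m by auto
  qed
  ultimately show ?thesis by simp
qed

lemma mono_pow_bound: "\<bar>mono_pow \<xi> \<alpha>\<bar> \<le> norm \<xi> ^ mi_abs \<alpha>"
proof -
  have "\<bar>mono_pow \<xi> \<alpha>\<bar> = (\<Prod>i\<in>UNIV. \<bar>\<xi> $ i\<bar> ^ \<alpha> i)"
    unfolding mono_pow_def by (simp add: abs_prod power_abs)
  also have "\<dots> \<le> (\<Prod>i\<in>UNIV. norm \<xi> ^ \<alpha> i)"
    by (intro prod_mono conjI power_mono component_le_norm_cart) auto
  also have "\<dots> = norm \<xi> ^ mi_abs \<alpha>" unfolding mi_abs_def by (simp add: power_sum)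
  finally show ?thesis .
qed

lemma symb_bound:
  fixes b :: "('d::finite \<Rightarrow> nat) \<Rightarrow> ('a::real_normed_vector \<Rightarrow>\<^sub>L 'a)"
  shows   "norm (symb n b \<xi>) \<le> (\<Sum>\<alpha>\<in>{\<alpha>. mi_abs \<alpha> \<le> n}. norm (b \<alpha>)) * (1 + norm \<xi>) ^ n"
proof -
  have "norm (symb n b \<xi>) \<le> (\<Sum>\<alpha>\<in>{\<alpha>. mi_abs \<alpha> \<le> n}. norm (mono_pow \<xi> \<alpha> *\<^sub>R b \<alpha>))"
    unfolding symb_def by (rule norm_sum)
  also have "\<dots> \<le> (\<Sum>\<alpha>\<in>{\<alpha>. mi_abs \<alpha> \<le> n}. norm (b \<alpha>) * (1 + norm \<xi>) ^ n)"
  proof (rule sum_mono)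
    fix \<alpha> :: "'d \<Rightarrow> nat" assume a: "\<alpha> \<in> {\<alpha>. mi_abs \<alpha> \<le> n}"
    have "\<bar>mono_pow \<xi> \<alpha>\<bar> \<le> norm \<xi> ^ mi_abs \<alpha>" by (rule mono_pow_bound)
    also have "\<dots> \<le> (1 + norm \<xi>) ^ mi_abs \<alpha>" by (intro power_mono) auto
    also have "\<dots> \<le> (1 + norm \<xi>) ^ n" using a by (intro power_increasing) auto
    finally have "\<bar>mono_pow \<xi> \<alpha>\<bar> \<le> (1 + norm \<xi>) ^ n" .
    then show "norm (mono_pow \<xi> \<alpha> *\<^sub>R b \<alpha>) \<le> norm (b \<alpha>) * (1 + norm \<xi>) ^ n"
      by (simp add: mult.commute[of "norm (b \<alpha>)"] mult_right_mono)
  qed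
  also have "\<dots> = (\<Sum>\<alpha>\<in>{\<alpha>. mi_abs \<alpha> \<le> n}. norm (b \<alpha>)) * (1 + norm \<xi>) ^ n"
    by (simp add: sum_distrib_right)
  finally show ?thesis .
qed

lemma N0_bound:
  fixes b :: "('d::finite \<Rightarrow> nat) \<Rightarrow> ('a::real_normed_vector \<Rightarrow>\<^sub>L 'a)"
  shows "norm (symb n b \<xi>) \<le> N0 n (symb n b) * (1 + norm \<xi>) ^ n"
proof -
  let ?C = "(\<Sum>\<alpha>\<in>{\<alpha>. mi_abs \<alpha> \<le> n}. norm (b \<alpha>))"
  have pos: "(1 + norm x) ^ n > 0" for x :: "real^'d" by (simp add: add_pos_nonneg)
  have bdd: "bdd_above (range (\<lambda>x. norm (symb n b x) / (1 + norm x) ^ n))"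
  proof (rule bdd_aboveI2)
    fix x show "norm (symb n b x) / (1 + norm x) ^ n \<le> ?C"
      using symb_bound[of n b x] pos[of x] by (simp add: divide_le_eq)
  qed
  have "norm (symb n b \<xi>) / (1 + norm \<xi>) ^ n \<le> N0 n (symb n b)"
    unfolding N0_def by (rule cSUP_upper[OF _ bdd]) simp
  then show ?thesis using pos[of \<xi>] by (simp add: divide_le_eq)
qed

lemma inv_scale:
  assumes "is_inverse_op S T" "c \<noteq> 0"
  shows "is_inverse_op ((1/c) *\<^sub>R S) (c *\<^sub>R T)"
proof -
  have ST: "S (T x) = x" and TS: "T (S x) = x" for x
    using assms(1) unfolding is_inverse_op_def
    by (metis blinfun_apply_blinfun_compose blinfun_apply_id_blinfun)+
  show ?thesis unfolding is_inverse_op_def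
    by (intro conjI; rule blinfun_eqI) (simp_all add: bls blinfun.scaleR_right ST TS assms(2))
qed

lemma cscal_inv:
  assumes J: "complex_structure J" and z: "z \<noteq> 0"
  shows "is_inverse_op (cscal J (1/z)) (cscal J z)"
  unfolding is_inverse_op_def using z by (simp add: cscal_mult[OF J] cscal_one)

lemma princ:
  fixes p :: "('d::finite \<Rightarrow> nat) \<Rightarrow> ('a::banach \<Rightarrow>\<^sub>L 'a)" and \<xi> :: "real^'d"
  assumes J: "complex_structure J" and m: "m \<ge> 1"
    and p_hom: "\<forall>\<alpha>. mi_abs \<alpha> \<noteq> m \<longrightarrow> p \<alpha> = 0"
    and ell: "normally_elliptic J \<kappa> m p"
    and g: "\<gamma> = 1 / (8 * \<kappa>)"
    and re: "- \<gamma> * norm \<xi> ^ m \<le> Re z" and nz: "norm \<xi> ^ m = 0 \<Longrightarrow> z \<noteq> 0"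
  shows "\<exists>R. is_inverse_op R (cscal J z + symb m p \<xi>) \<and>
           norm R \<le> 2 * \<kappa> / (norm \<xi> ^ m + cmod (z + complex_of_real (\<gamma> * norm \<xi> ^ m)))"
proof -
  have k1: "\<kappa> \<ge> 1" using ell unfolding normally_elliptic_def elliptic_def by simp
  have ellv: "\<forall>\<eta>::real^'d. norm \<eta> = 1 \<longrightarrow> (\<forall>w\<in>sector (pi/2) 0.
        \<exists>S. is_inverse_op S (cscal J w + symb m p \<eta>) \<and>
            norm S \<le> \<kappa> / (1 + cmod (w - complex_of_real 0)))"
    using ell unfolding normally_elliptic_def elliptic_def by simp
  show ?thesis
  proof (cases "\<xi> = 0")
    case True
    have A0: "symb m p \<xi> = 0"
      using symb_hom[OF p_hom, of 0 0] m True by (simp add: power_0_left)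
    have z0: "z \<noteq> 0" using nz True m by simp
    have "norm (cscal J (1/z)) \<le> cmod (1/z)" by (rule norm_cscal[OF J])
    also have "\<dots> = 1 / cmod z" by (simp add: norm_divide)
    also have "\<dots> \<le> 2 * \<kappa> / cmod z" using k1 z0 by (intro divide_right_mono) auto
    finally show ?thesis using cscal_inv[OF J z0] A0 True m
      by (intro exI[of _ "cscal J (1/z)"]) (simp add: power_0_left)
  next
    case False
    define r where "r = norm \<xi>"
    define s where "s = r ^ m"
    have r: "r > 0" using False by (simp add: r_def)
    have s: "s > 0" using r by (simp add: s_def)
    define \<eta> where "\<eta> = (1/r) *\<^sub>R \<xi>"
    have n\<eta>: "norm \<eta> = 1" using r by (simp add: \<eta>_def r_def)
    have x\<eta>: "\<xi> = r *\<^sub>R \<eta>" using r by (simp add: \<eta>_def)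
    have A\<xi>: "symb m p \<xi> = s *\<^sub>R symb m p \<eta>"
      unfolding s_def by (subst x\<eta>) (rule symb_hom[OF p_hom])
    define z0 where "z0 = Complex (max (Re z) 0) (Im z)"
    define u where "u = min (Re z) 0"
    have zdec: "z = z0 + complex_of_real u"
      by (rule complex_eqI) (auto simp: z0_def u_def)
    define w where "w = z0 / complex_of_real s"
    have "Re w \<ge> 0" using s by (simp add: w_def z0_def Re_divide_of_real)
    then have "w \<in> sector (pi/2) 0" by (simp add: sector_half)
    with ellv n\<eta> obtain S where S: "is_inverse_op S (cscal J w + symb m p \<eta>)"
      and nS: "norm S \<le> \<kappa> / (1 + cmod (w - complex_of_real 0))" by blast
    have cw: "cmod w = cmod z0 / s" using s by (simp add: w_def norm_divide)
    have eq1: "cscal J z0 + symb m p \<xi> = s *\<^sub>R (cscal J w + symb m p \<eta>)"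
      using s by (simp add: w_def cscal_div_real A\<xi> scaleR_add_right)
    define R0 where "R0 = (1/s) *\<^sub>R S"
    have R0: "is_inverse_op R0 (cscal J z0 + symb m p \<xi>)"
      unfolding R0_def eq1 using inv_scale[OF S] s by simp
    have "norm R0 = norm S / s" using s by (simp add: R0_def)
    also have "\<dots> \<le> (\<kappa> / (1 + cmod z0 / s)) / s" using nS s cw by (intro divide_right_mono) auto
    also have "\<dots> = \<kappa> / (s + cmod z0)"
    proof -
      have e: "(1 + cmod z0 / s) * s = s + cmod z0" using s by (simp add: field_simps)
      show ?thesis by (simp only: divide_divide_eq_left e)
    qed
    finally have nR0: "norm R0 \<le> \<kappa> / (s + cmod z0)" .
    have eq2: "cscal J z + symb m p \<xi> = (cscal J z0 + symb m p \<xi>) + u *\<^sub>R id_blinfun"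
      by (subst zdec) (simp add: cscal_add cscal_of_real algebra_simps)
    have k0: "\<kappa> > 0" using k1 by simp
    have g0: "\<gamma> > 0" and g8: "\<gamma> \<le> 1/8" and gk: "\<gamma> * \<kappa> = 1/8"
      using k1 by (auto simp: g field_simps)
    have ure: "-\<gamma> * s \<le> Re z" using re by (simp add: s_def r_def)
    have u_le: "\<bar>u\<bar> \<le> \<gamma> * s" using ure g0 s mult_pos_pos[OF g0 s] unfolding u_def by (auto simp: min_def)
    have nB: "norm (u *\<^sub>R (id_blinfun :: 'a \<Rightarrow>\<^sub>L 'a)) \<le> \<gamma> * s"
    proof -
      have "norm (u *\<^sub>R (id_blinfun :: 'a \<Rightarrow>\<^sub>L 'a)) = \<bar>u\<bar> * norm (id_blinfun :: 'a \<Rightarrow>\<^sub>L 'a)" by simp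
      also have "\<dots> \<le> \<bar>u\<bar> * 1" by (intro mult_left_mono norm_blinfun_id_le) auto
      finally show ?thesis using u_le by simp
    qed
    have c0: "cmod z0 \<ge> 0" by simp
    have "norm (u *\<^sub>R (id_blinfun :: 'a \<Rightarrow>\<^sub>L 'a)) * (\<kappa> / (s + cmod z0)) \<le> (\<gamma> * s) * (\<kappa> / (s + cmod z0))"
      using nB k0 s c0 by (intro mult_right_mono) auto
    also have "\<dots> = (\<gamma> * \<kappa>) * (s / (s + cmod z0))" by simp
    also have "\<dots> \<le> (\<gamma> * \<kappa>) * 1"
    proof (intro mult_left_mono)
      show "s / (s + cmod z0) \<le> 1" using s c0 by (simp add: divide_le_eq add_pos_nonneg)
    qed (use g0 k0 in auto)
    finally have pB: "norm (u *\<^sub>R (id_blinfun :: 'a \<Rightarrow>\<^sub>L 'a)) * (\<kappa> / (s + cmod z0)) \<le> 1/8"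
      using gk by simp
    from perturb[OF R0 nR0 pB] obtain R where R: "is_inverse_op R (cscal J z + symb m p \<xi>)"
      and nR: "norm R \<le> (\<kappa> / (s + cmod z0)) / (1 - 1/8)" unfolding eq2 by auto
    have "cmod (z + complex_of_real (\<gamma> * s)) = cmod (z0 + complex_of_real (u + \<gamma> * s))"
      by (simp add: zdec algebra_simps)
    also have "\<dots> \<le> cmod z0 + \<bar>u + \<gamma> * s\<bar>" using norm_triangle_ineq[of z0 "complex_of_real (u + \<gamma> * s)"] by (simp del: of_real_add of_real_mult)
    also have "\<dots> \<le> cmod z0 + \<gamma> * s" using ure g0 s mult_pos_pos[OF g0 s] unfolding u_def by (auto simp: min_def)
    finally have cD: "cmod (z + complex_of_real (\<gamma> * s)) \<le> cmod z0 + \<gamma> * s" .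
    define D where "D = s + cmod (z + complex_of_real (\<gamma> * s))"
    have D0: "D > 0" using s by (simp add: D_def add_pos_nonneg)
    have "\<gamma> * s \<le> (1/8) * s" using g8 s by (intro mult_right_mono) auto
    moreover have "D \<le> s + (cmod z0 + \<gamma> * s)" unfolding D_def using cD by (rule add_left_mono)
    ultimately have "D \<le> (7/4) * s + (7/4) * cmod z0" using s c0 by linarith
    then have DD: "D \<le> (7/4) * (s + cmod z0)" by (simp add: distrib_left)
    have "(\<kappa> / (s + cmod z0)) / (1 - 1/8) = (8 * \<kappa>) / (7 * (s + cmod z0))" by (simp add: algebra_simps)
    also have "\<dots> \<le> 2 * \<kappa> / D"
    proof -
      have sc: "s + cmod z0 > 0" using s c0 by linarith
      have "8 * \<kappa> * D \<le> 8 * \<kappa> * ((7/4) * (s + cmod z0))" using DD k0 by (intro mult_left_mono) auto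
      then have "8 * \<kappa> * D \<le> 2 * \<kappa> * (7 * (s + cmod z0))" by simp
      then show ?thesis using sc D0 by (simp add: divide_simps)
    qed
    finally have "norm R \<le> 2 * \<kappa> / D" using nR by linarith
    then show ?thesis using R unfolding D_def s_def r_def by blast
  qed
qed

lemma growth:
  fixes K r :: real
  assumes K: "K \<ge> 0" and m: "m \<ge> 1" and r: "r \<ge> 0"
  shows "K * (1 + r) ^ (m - 1) \<le> r ^ m + (K * (1 + (2 ^ (m - 1) * K + 1)) ^ (m - 1) + 1)"
proof (cases "r \<le> 2 ^ (m - 1) * K + 1")
  case True
  have "(1 + r) ^ (m - 1) \<le> (1 + (2 ^ (m - 1) * K + 1)) ^ (m - 1)"
    using True r by (intro power_mono) auto
  then have "K * (1 + r) ^ (m - 1) \<le> K * (1 + (2 ^ (m - 1) * K + 1)) ^ (m - 1)"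
    using K by (rule mult_left_mono)
  moreover have "r ^ m \<ge> 0" using r by simp
  ultimately show ?thesis by linarith
next
  case False
  have K0: "2 ^ (m - 1) * K \<ge> 0" using K by simp
  have r1: "r \<ge> 1" using False K0 by linarith
  have "(1 + r) ^ (m - 1) \<le> (2 * r) ^ (m - 1)" using r1 by (intro power_mono) auto
  then have "K * (1 + r) ^ (m - 1) \<le> K * (2 * r) ^ (m - 1)" using K by (rule mult_left_mono)
  also have "\<dots> = (2 ^ (m - 1) * K) * r ^ (m - 1)" by (simp add: power_mult_distrib)
  also have "\<dots> \<le> r * r ^ (m - 1)" using False r by (intro mult_right_mono) auto
  also have "\<dots> = r ^ m" using m by (metis Suc_diff_1 le_less_trans less_numeral_extra(1) power_Suc order_less_le_trans zero_less_one)
  finally show ?thesis using K0 K by (smt (verit) zero_le_power mult_nonneg_nonneg)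
qed

theorem proposition4p3:
  fixes p :: "('d::finite \<Rightarrow> nat) \<Rightarrow> ('a::banach \<Rightarrow>\<^sub>L 'a)"
    and J :: "'a \<Rightarrow>\<^sub>L 'a" and m :: nat and \<kappa> :: real
  assumes J: "complex_structure J"
    and m: "m \<ge> 1"
    and p_lin: "\<forall>\<alpha>. clin_op J (p \<alpha>)"
    and p_hom: "\<forall>\<alpha>. mi_abs \<alpha> \<noteq> m \<longrightarrow> p \<alpha> = 0"
    and p_nz: "\<exists>\<alpha>. mi_abs \<alpha> = m \<and> p \<alpha> \<noteq> 0"
    and ell: "normally_elliptic J \<kappa> m p"
  shows "\<exists>\<phi> \<gamma>. 0 < \<phi> \<and> \<phi> < pi \<and> 0 < \<gamma> \<and>
    (\<forall>c::real. \<exists>\<omega>>0. \<forall>b :: ('d \<Rightarrow> nat) \<Rightarrow> ('a \<Rightarrow>\<^sub>L 'a).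
       (\<forall>\<alpha>. clin_op J (b \<alpha>)) \<longrightarrow> (\<forall>\<alpha>. mi_abs \<alpha> \<ge> m \<longrightarrow> b \<alpha> = 0) \<longrightarrow>
       N0 (m - 1) (symb (m - 1) b) = c \<longrightarrow>
       (\<forall>(\<xi>::real^'d) z. z \<in> sector \<phi> (- \<gamma> * norm \<xi> ^ m + \<omega>) \<longrightarrow>
          (\<exists>S. is_inverse_op S (cscal J z + symb m (\<lambda>\<alpha>. p \<alpha> + b \<alpha>) \<xi>) \<and>
               norm S \<le> (4 * \<kappa> + 2) /
                 (norm \<xi> ^ m + cmod (z + complex_of_real (\<gamma> * norm \<xi> ^ m))))))"
proof -
  have k1: "\<kappa> \<ge> 1" using ell unfolding normally_elliptic_def elliptic_def by simp
  define \<gamma> where "\<gamma> = 1 / (8 * \<kappa>)"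
  have g0: "\<gamma> > 0" using k1 by (simp add: \<gamma>_def)
  have main: "\<exists>\<omega>>0. \<forall>b :: ('d \<Rightarrow> nat) \<Rightarrow> ('a \<Rightarrow>\<^sub>L 'a).
       (\<forall>\<alpha>. clin_op J (b \<alpha>)) \<longrightarrow> (\<forall>\<alpha>. mi_abs \<alpha> \<ge> m \<longrightarrow> b \<alpha> = 0) \<longrightarrow>
       N0 (m - 1) (symb (m - 1) b) = c \<longrightarrow>
       (\<forall>(\<xi>::real^'d) z. z \<in> sector (pi/2) (- \<gamma> * norm \<xi> ^ m + \<omega>) \<longrightarrow>
          (\<exists>S. is_inverse_op S (cscal J z + symb m (\<lambda>\<alpha>. p \<alpha> + b \<alpha>) \<xi>) \<and>
               norm S \<le> (4 * \<kappa> + 2) /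
                 (norm \<xi> ^ m + cmod (z + complex_of_real (\<gamma> * norm \<xi> ^ m)))))" for c
  proof -
    define C where "C = max c 0"
    define K where "K = 4 * \<kappa> * C"
    define \<omega> where "\<omega> = K * (1 + (2 ^ (m - 1) * K + 1)) ^ (m - 1) + 1"
    have K0: "K \<ge> 0" using k1 by (simp add: K_def C_def)
    have "0 \<le> K * (1 + (2 ^ (m - 1) * K + 1)) ^ (m - 1)"
      using K0 by (intro mult_nonneg_nonneg zero_le_power) auto
    then have w0: "\<omega> > 0" unfolding \<omega>_def by linarith
    show ?thesis
    proof (intro exI[of _ \<omega>] conjI allI impI w0)
      fix b :: "('d \<Rightarrow> nat) \<Rightarrow> ('a \<Rightarrow>\<^sub>L 'a)" and \<xi> :: "real^'d" and z
      assume hb: "\<forall>\<alpha>. m \<le> mi_abs \<alpha> \<longrightarrow> b \<alpha> = 0" and hN: "N0 (m - 1) (symb (m - 1) b) = c"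
        and zin: "z \<in> sector (pi / 2) (- \<gamma> * norm \<xi> ^ m + \<omega>)"
      define s where "s = norm \<xi> ^ m"
      have s0: "s \<ge> 0" by (simp add: s_def)
      have rez: "- \<gamma> * s + \<omega> \<le> Re z" using zin by (simp add: sector_half s_def)
      have re: "- \<gamma> * norm \<xi> ^ m \<le> Re z" using rez w0 by (simp add: s_def)
      have nz: "z \<noteq> 0" if "norm \<xi> ^ m = 0"
        using rez w0 that by (auto simp: s_def)
      obtain R where R: "is_inverse_op R (cscal J z + symb m p \<xi>)"
        and nR: "norm R \<le> 2 * \<kappa> / (norm \<xi> ^ m + cmod (z + complex_of_real (\<gamma> * norm \<xi> ^ m)))"
        using princ[OF J m p_hom ell \<gamma>_def re nz] by blast
      define D where "D = s + cmod (z + complex_of_real (\<gamma> * s))"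
      have "Re (z + complex_of_real (\<gamma> * s)) \<le> cmod (z + complex_of_real (\<gamma> * s))"
        by (rule complex_Re_le_cmod)
      then have Dw: "s + \<omega> \<le> D" using rez unfolding D_def by simp
      have D0: "D > 0" using Dw w0 s0 by linarith
      define B where "B = symb (m - 1) b \<xi>"
      have "norm B \<le> c * (1 + norm \<xi>) ^ (m - 1)" using N0_bound[of "m - 1" b \<xi>] hN by (simp add: B_def)
      also have "\<dots> \<le> C * (1 + norm \<xi>) ^ (m - 1)" by (intro mult_right_mono) (auto simp: C_def)
      finally have nB: "norm B \<le> C * (1 + norm \<xi>) ^ (m - 1)" .
      have "4 * \<kappa> * norm B \<le> 4 * \<kappa> * (C * (1 + norm \<xi>) ^ (m - 1))"
        using nB k1 by (intro mult_left_mono) auto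
      also have "\<dots> = K * (1 + norm \<xi>) ^ (m - 1)" by (simp add: K_def)
      also have "\<dots> \<le> s + \<omega>" unfolding s_def \<omega>_def by (rule growth[OF K0 m]) simp
      finally have "4 * \<kappa> * norm B \<le> D" using Dw by linarith
      then have pB: "norm B * (2 * \<kappa> / D) \<le> 1/2" using D0 by (simp add: divide_simps ac_simps)
      have nR': "norm R \<le> 2 * \<kappa> / D" using nR by (simp add: D_def s_def)
      from perturb[OF R nR' pB] obtain S where S: "is_inverse_op S (cscal J z + symb m p \<xi> + B)"
        and nS: "norm S \<le> (2 * \<kappa> / D) / (1 - 1/2)" by auto
      have eq: "cscal J z + symb m (\<lambda>\<alpha>. p \<alpha> + b \<alpha>) \<xi> = cscal J z + symb m p \<xi> + B"
        unfolding B_def using symb_split[OF m p_hom hb] by simp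
      have "(2 * \<kappa> / D) / (1 - 1/2) = 4 * \<kappa> / D" by simp
      also have "\<dots> \<le> (4 * \<kappa> + 2) / D" using D0 by (intro divide_right_mono) auto
      finally have "norm S \<le> (4 * \<kappa> + 2) / D" using nS by linarith
      then show "\<exists>S. is_inverse_op S (cscal J z + symb m (\<lambda>\<alpha>. p \<alpha> + b \<alpha>) \<xi>) \<and>
               norm S \<le> (4 * \<kappa> + 2) /
                 (norm \<xi> ^ m + cmod (z + complex_of_real (\<gamma> * norm \<xi> ^ m)))"
        using S unfolding eq D_def s_def by blast
    qed
  qed
  show ?thesis
    by (rule exI[of _ "pi/2"], rule exI[of _ \<gamma>]) (use main g0 in auto)
qed

end
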